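(* Let $d\ge2$, $\alpha\in(1,2)$, and let $X\sim\mu$, where $\mu$ is a nondegenerate $\alpha$-stable distribution on $\mathbb{R}^d$ with no shift and characteristic exponent $|z|^\alpha V(u_z)$, and suppose the density $g$ of $\mu$ is symmetric, $g(x)=g(-x)$ (so $V$ is real and positive). Let $Z=(Z_1,\dots,Z_d)$ with $Z_i$ i.i.d. $N(0,1)$, and let $\zeta$ be a positive random variable independent of $Z$ with $\mathbb{E}e^{-t\zeta}=e^{-t^{\alpha/2}}$ for $t\ge0$. Then $V(Z/|Z|)^{1/\alpha}\sqrt{2\zeta}\,|Z|$ has the same distribution as $|X|$.
   Context: $\mathbb{S}^{d-1}$ is the unit sphere, $u_z=z/|z|$. An $\alpha$-stable distribution ($\alpha\ne1$) with no shift has $\hat\mu(z)=\exp\{-|z|^\alpha V(u_z)\}$, $V(u)=\int_{\mathbb{S}^{d-1}}|\langle u,v\rangle|^\alpha[1-i\tan(\pi\alpha/2)\mathrm{sgn}\langle u,v\rangle]\lambda(dv)$, $\lambda$ a finite nonzero Borel measure on the sphere. Nondegenerate: support not contained in a proper affine subspace. *)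

theory Defs
  imports "HOL-Probability.Probability"
begin

definition char_fun_mv :: "'a::euclidean_space measure \<Rightarrow> 'a \<Rightarrow> complex" where
  "char_fun_mv M z = (CLINT x|M. cis (z \<bullet> x))"

text \<open>The function V of an alpha-stable law with spectral measure lam (a finite
  measure on borel sets concentrated on the unit sphere).\<close>
definition stable_V :: "real \<Rightarrow> 'a::euclidean_space measure \<Rightarrow> 'a \<Rightarrow> complex" where
  "stable_V \<alpha> lam u = (CLINT v|lam. complex_of_real (\<bar>u \<bullet> v\<bar> powr \<alpha>) *
       (1 - \<i> * complex_of_real (tan (pi * \<alpha> / 2) * sgn (u \<bullet> v))))"

text \<open>Nondegenerate: the support is not contained in a proper affine subspace,
  i.e. no proper affine subspace carries full mass (affine sets are closed).\<close>
definition nondegenerate :: "'a::euclidean_space measure \<Rightarrow> bool" where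
  "nondegenerate M \<longleftrightarrow> \<not> (\<exists>A. affine A \<and> A \<noteq> UNIV \<and> measure M A = 1)"

end

theory Submission
  imports Defs
begin



lemma mom_pow:
  fixes P :: "real measure"
  assumes P: "prob_space P" "sets P = sets borel" "AE x in P. 0 \<le> x \<and> x \<le> 1"
  shows "integrable P (\<lambda>x. x^i)"
proof -
  interpret prob_space P by fact
  have [measurable_cong]: "sets P = sets borel" by fact
  show ?thesis
  proof (rule integrable_const_bound[where B=1])
    show "AE x in P. norm (x^i) \<le> 1" using P(3) by eventually_elim (auto intro: power_le_one)
  qed simp
qed

lemma mom_int:
  fixes P :: "real measure"
  assumes P: "prob_space P" "sets P = sets borel" "AE x in P. 0 \<le> x \<and> x \<le> 1"
  shows "(\<integral>x. (\<Sum>i\<le>k. a i * x^i) \<partial>P) = (\<Sum>i\<le>k. a i * (\<integral>x. x^i \<partial>P))"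
proof -
  have "(\<integral>x. (\<Sum>i\<le>k. a i * x^i) \<partial>P) = (\<Sum>i\<le>k. (\<integral>x. a i * x^i \<partial>P))"
    by (rule Bochner_Integration.integral_sum) (auto intro!: mom_pow[OF P])
  then show ?thesis by simp
qed

lemma mom_poly:
  fixes P :: "real measure"
  assumes P: "prob_space P" "sets P = sets borel" "AE x in P. 0 \<le> x \<and> x \<le> 1"
  shows "integrable P (\<lambda>x. \<Sum>i\<le>k. a i * x^i)"
proof -
  interpret prob_space P by fact
  have [measurable_cong]: "sets P = sets borel" by fact
  have "integrable P (\<lambda>x. x^i)" for i :: nat
  proof (rule integrable_const_bound[where B=1])
    show "AE x in P. norm (x^i) \<le> 1" using P(3) by eventually_elim (auto intro: power_le_one)
  qed simp
  then show ?thesis by auto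
qed

lemma mom_cont:
  fixes P Q :: "real measure" and f :: "real \<Rightarrow> real"
  assumes P: "prob_space P" "sets P = sets borel" "AE x in P. 0 \<le> x \<and> x \<le> 1"
  assumes Q: "prob_space Q" "sets Q = sets borel" "AE x in Q. 0 \<le> x \<and> x \<le> 1"
  assumes mom: "\<And>n::nat. (\<integral>x. x^n \<partial>P) = (\<integral>x. x^n \<partial>Q)"
  assumes f: "continuous_on UNIV f"
  shows "(\<integral>x. f x \<partial>P) = (\<integral>x. f x \<partial>Q)"
proof -
  have fm[measurable]: "f \<in> borel_measurable borel" using f by (rule borel_measurable_continuous_onI)
  obtain B where B: "\<And>x. x \<in> {0..1} \<Longrightarrow> \<bar>f x\<bar> \<le> B"
    using compact_imp_bounded[OF compact_continuous_image[OF continuous_on_subset[OF f] compact_Icc]]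
    by (fastforce simp: bounded_iff)
  have key: "\<bar>(\<integral>x. f x \<partial>P) - (\<integral>x. f x \<partial>Q)\<bar> \<le> 2 * e" if e: "e > 0" for e
  proof -
    obtain p where p: "real_polynomial_function p" "\<And>x. x \<in> {0..1} \<Longrightarrow> \<bar>f x - p x\<bar> < e"
      using Stone_Weierstrass_real_polynomial_function[OF compact_Icc continuous_on_subset[OF f] e, of 0 1]
      by auto
    obtain a k where pk: "p = (\<lambda>x. \<Sum>i\<le>k. a i * x^i)" using real_polynomial_function_imp_sum[OF p(1)] by blast
    have approx: "\<bar>(\<integral>x. f x \<partial>R) - (\<integral>x. p x \<partial>R)\<bar> \<le> e"
      if R: "prob_space R" "sets R = sets borel" "AE x in R. 0 \<le> x \<and> x \<le> 1" for R
    proof -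
      interpret R: prob_space R by fact
      have [measurable_cong]: "sets R = sets borel" by fact
      have ip: "integrable R p" unfolding pk by (rule mom_poly[OF R])
      have "AE x in R. norm (f x) \<le> B" using R(3) by eventually_elim (use B in auto)
      then have iff: "integrable R f"
        by (rule R.integrable_const_bound[where B=B]) simp
      have "\<bar>(\<integral>x. f x \<partial>R) - (\<integral>x. p x \<partial>R)\<bar> = \<bar>\<integral>x. f x - p x \<partial>R\<bar>"
        using ip iff by simp
      also have "\<dots> \<le> (\<integral>x. \<bar>f x - p x\<bar> \<partial>R)" by (rule integral_abs_bound)
      also have "\<dots> \<le> (\<integral>x. e \<partial>R)"
      proof (rule integral_mono_AE)
        show "AE x in R. \<bar>f x - p x\<bar> \<le> e" using R(3) by eventually_elim (use p(2) in \<open>auto intro: less_imp_le\<close>)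
      qed (use ip iff in auto)
      finally show ?thesis by (simp add: R.prob_space)
    qed
    have "(\<integral>x. p x \<partial>P) = (\<integral>x. p x \<partial>Q)"
    proof -
      show ?thesis unfolding pk mom_int[OF P] mom_int[OF Q] mom ..
    qed
    then show ?thesis using approx[OF P] approx[OF Q] by linarith
  qed
  show ?thesis
  proof (rule ccontr)
    assume ne: "(\<integral>x. f x \<partial>P) \<noteq> (\<integral>x. f x \<partial>Q)"
    let ?d = "\<bar>(\<integral>x. f x \<partial>P) - (\<integral>x. f x \<partial>Q)\<bar>"
    have "?d \<le> 2 * (?d / 4)" using ne by (intro key) auto
    then show False using ne by auto
  qed
qed

lemma mom_unique:
  fixes P Q :: "real measure"
  assumes P: "prob_space P" "sets P = sets borel" "AE x in P. 0 \<le> x \<and> x \<le> 1"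
  assumes Q: "prob_space Q" "sets Q = sets borel" "AE x in Q. 0 \<le> x \<and> x \<le> 1"
  assumes mom: "\<And>n::nat. (\<integral>x. x^n \<partial>P) = (\<integral>x. x^n \<partial>Q)"
  shows "P = Q"
proof (rule cdf_unique)
  show "real_distribution P" "real_distribution Q" using P Q
    by (auto simp: real_distribution_def real_distribution_axioms_def)
  show "cdf P = cdf Q"
  proof
    fix a :: real
    define f where "f k x = max 0 (min 1 (1 - real (Suc k) * (x - a)))" for k :: nat and x :: real
    have fc: "continuous_on UNIV (f k)" for k unfolding f_def by (intro continuous_intros)
    have lim: "(\<lambda>k. f k x) \<longlonglongrightarrow> indicator {..a} x" for x
    proof (cases "x \<le> a")
      case True
      then have "f k x = 1" for k unfolding f_def by (auto simp: mult_nonneg_nonpos)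
      then show ?thesis using True by simp
    next
      case False
      then have xa: "x - a > 0" by simp
      obtain N :: nat where N: "1 / (x - a) < N" using reals_Archimedean2 by blast
      have "eventually (\<lambda>k. f k x = 0) sequentially"
      proof (rule eventually_sequentiallyI[of N])
        fix k assume "N \<le> k"
        then have "1 / (x - a) < real (Suc k)" using N by linarith
        then have "1 < real (Suc k) * (x - a)" using xa by (simp add: field_simps)
        then show "f k x = 0" unfolding f_def by simp
      qed
      then show ?thesis using False by (simp add: tendsto_eventually)
    qed
    have conv: "(\<lambda>k. \<integral>x. f k x \<partial>R) \<longlonglongrightarrow> cdf R a"
      if R: "prob_space R" "sets R = sets borel" for R
    proof -
      interpret R: prob_space R by fact
      have [measurable_cong]: "sets R = sets borel" by fact
      have fm[measurable]: "f k \<in> borel_measurable borel" for k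
        using fc by (rule borel_measurable_continuous_onI)
      have "(\<lambda>k. \<integral>x. f k x \<partial>R) \<longlonglongrightarrow> (\<integral>x. indicator {..a} x \<partial>R)"
        by (rule integral_dominated_convergence[where w="\<lambda>_. 1"])
           (use lim in \<open>auto simp: f_def\<close>)
      also have "(\<integral>x. indicator {..a} x \<partial>R) = cdf R a"
        by (simp add: cdf_def)
      finally show ?thesis .
    qed
    have "(\<lambda>k. \<integral>x. f k x \<partial>P) \<longlonglongrightarrow> cdf Q a"
      using conv[OF Q(1,2)] mom_cont[OF P Q mom fc] by simp
    then show "cdf P a = cdf Q a" using conv[OF P(1,2)] LIMSEQ_unique by blast
  qed
qed



lemma gauss:
  fixes M :: "'w measure" and Z :: "'w \<Rightarrow> real ^ 'n"
  assumes M_prob: "prob_space M"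
    and Z_meas: "Z \<in> borel_measurable M"
    and Z_gauss: "\<And>i. distributed M lborel (\<lambda>\<omega>. Z \<omega> $ i) std_normal_density"
    and Z_indep: "prob_space.indep_vars M (\<lambda>_. borel) (\<lambda>i \<omega>. Z \<omega> $ i) UNIV"
  shows "(CLINT \<omega>|M. cis (Z \<omega> \<bullet> y)) = complex_of_real (exp (- (norm y ^ 2) / 2))"
proof -
  interpret prob_space M by fact
  have [measurable]: "Z \<in> borel_measurable M" by fact
  have Zi[measurable]: "(\<lambda>\<omega>. Z \<omega> $ i) \<in> borel_measurable M" for i
    using measurable_compose[OF Z_meas borel_measurable_nth] by simp
  define X where "X i \<omega> = Z \<omega> $ i * y $ i" for i \<omega>
  have Xm[measurable]: "X i \<in> borel_measurable M" for i unfolding X_def by measurable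
  have ind: "indep_vars (\<lambda>_. borel) X UNIV"
    unfolding X_def by (rule indep_vars_compose2[OF Z_indep]) simp
  have dZ: "distr M borel (\<lambda>\<omega>. Z \<omega> $ i) = std_normal_distribution" for i
  proof -
    have "distr M borel (\<lambda>\<omega>. Z \<omega> $ i) = distr M lborel (\<lambda>\<omega>. Z \<omega> $ i)"
      by (rule distr_cong) auto
    also have "\<dots> = std_normal_distribution" using Z_gauss[of i] by (simp add: distributed_def)
    finally show ?thesis .
  qed
  have cX: "char (distr M borel (X i)) 1 = complex_of_real (exp (- ((y $ i) ^ 2) / 2))" for i
  proof -
    have "char (distr M borel (X i)) 1 = (CLINT \<omega>|M. iexp (y $ i * Z \<omega> $ i))"
      by (simp add: char_def integral_distr X_def mult.commute)
    also have "\<dots> = char (distr M borel (\<lambda>\<omega>. Z \<omega> $ i)) (y $ i)"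
      by (simp add: char_def integral_distr)
    also have "\<dots> = complex_of_real (exp (- ((y $ i) ^ 2) / 2))"
      by (simp add: dZ char_std_normal_distribution)
    finally show ?thesis .
  qed
  have "(CLINT \<omega>|M. cis (Z \<omega> \<bullet> y)) = char (distr M borel (\<lambda>\<omega>. \<Sum>i\<in>UNIV. X i \<omega>)) 1"
    by (simp add: char_def integral_distr X_def inner_vec_def cis_conv_exp)
  also have "\<dots> = (\<Prod>i\<in>UNIV. char (distr M borel (X i)) 1)"
    by (rule char_distr_sum[OF ind])
  also have "\<dots> = (\<Prod>i\<in>UNIV. complex_of_real (exp (- ((y $ i) ^ 2) / 2)))" by (simp add: cX)
  also have "\<dots> = complex_of_real (exp (\<Sum>i\<in>UNIV. - ((y $ i) ^ 2) / 2))"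
    by (simp add: exp_sum)
  also have "(\<Sum>i\<in>UNIV. - ((y $ i) ^ 2) / 2) = - (norm y ^ 2) / 2"
  proof -
    have "norm y ^ 2 = (\<Sum>i\<in>UNIV. y $ i * y $ i)"
      by (simp only: power2_norm_eq_inner inner_vec_def) simp
    then show ?thesis by (simp add: power2_eq_square sum_divide_distrib[symmetric] sum_negf)
  qed
  finally show ?thesis .
qed

theorem proposition7p2:
  fixes \<alpha> :: real
    and lam :: "(real ^ 'n) measure"
    and \<mu> :: "(real ^ 'n) measure"
    and g :: "real ^ 'n \<Rightarrow> real"
    and M :: "'w measure"
    and Z :: "'w \<Rightarrow> real ^ 'n"
    and \<zeta> :: "'w \<Rightarrow> real"
  assumes dim: "CARD('n) \<ge> 2"
    and alpha: "1 < \<alpha>" "\<alpha> < 2"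
    and lam_sets: "sets lam = sets borel"
    and lam_fin: "finite_measure lam"
    and lam_sphere: "emeasure lam (UNIV - sphere 0 1) = 0"
    and lam_nonzero: "emeasure lam (sphere 0 1) \<noteq> 0"
    and mu_prob: "prob_space \<mu>"
    and mu_sets: "sets \<mu> = sets borel"
    and mu_char: "\<And>z. char_fun_mv \<mu> z =
        exp (- complex_of_real (norm z powr \<alpha>) * stable_V \<alpha> lam (z /\<^sub>R norm z))"
    and mu_nondeg: "nondegenerate \<mu>"
    and g_meas: "g \<in> borel_measurable borel"
    and g_nonneg: "\<And>x. g x \<ge> 0"
    and mu_density: "\<mu> = density lborel (\<lambda>x. ennreal (g x))"
    and g_sym: "\<And>x. g x = g (- x)"
    and M_prob: "prob_space M"
    and Z_meas: "Z \<in> borel_measurable M"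
    and Z_gauss: "\<And>i. distributed M lborel (\<lambda>\<omega>. Z \<omega> $ i) std_normal_density"
    and Z_indep: "prob_space.indep_vars M (\<lambda>_. borel) (\<lambda>i \<omega>. Z \<omega> $ i) UNIV"
    and zeta_meas: "\<zeta> \<in> borel_measurable M"
    and zeta_pos: "\<And>\<omega>. \<omega> \<in> space M \<Longrightarrow> \<zeta> \<omega> > 0"
    and zeta_indep: "distr M (borel \<Otimes>\<^sub>M borel) (\<lambda>\<omega>. (Z \<omega>, \<zeta> \<omega>))
        = distr M borel Z \<Otimes>\<^sub>M distr M borel \<zeta>"
    and zeta_laplace: "\<And>t. t \<ge> 0 \<Longrightarrow>
        prob_space.expectation M (\<lambda>\<omega>. exp (- t * \<zeta> \<omega>)) = exp (- (t powr (\<alpha> / 2)))"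
  shows "distr M borel (\<lambda>\<omega>. Re (stable_V \<alpha> lam (Z \<omega> /\<^sub>R norm (Z \<omega>))) powr (1 / \<alpha>)
              * sqrt (2 * \<zeta> \<omega>) * norm (Z \<omega>))
         = distr \<mu> borel norm"

proof -
  interpret M: prob_space M by fact
  interpret mu: prob_space \<mu> by fact
  have [measurable]: "Z \<in> borel_measurable M" "\<zeta> \<in> borel_measurable M" using Z_meas zeta_meas by auto
  have [measurable_cong]: "sets \<mu> = sets borel" by fact
  define W where "W u = Re (stable_V \<alpha> lam u)" for u
  have V0: "stable_V \<alpha> lam 0 = 0" unfolding stable_V_def using alpha by simp
  have lb: "distr lborel borel (\<lambda>x::real^'n. - x) = lborel"
  proof -
    have "lborel = density (distr lborel borel (\<lambda>x::real^'n. 0 + (-1) *\<^sub>R x)) (\<lambda>_. \<bar>-1::real\<bar> ^ DIM(real^'n))"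
      by (rule lborel_affine) simp
    then show ?thesis by (simp add: density_1)
  qed
  have cism[measurable]: "(\<lambda>x::real^'n. cis (z \<bullet> x)) \<in> borel_measurable borel" for z
    unfolding cis_conv_exp by measurable
  have cmu: "char_fun_mv \<mu> z = (\<integral>x. g x *\<^sub>R cis (z \<bullet> x) \<partial>lborel)" for z
    unfolding char_fun_mv_def mu_density using g_nonneg
    by (subst integral_density) (auto simp: g_meas)
  have char_sym: "char_fun_mv \<mu> (-z) = char_fun_mv \<mu> z" for z
  proof -
    have "char_fun_mv \<mu> z = (\<integral>x. g x *\<^sub>R cis (z \<bullet> x) \<partial>distr lborel borel (\<lambda>x::real^'n. - x))"
      by (simp add: lb cmu)
    also have "\<dots> = (\<integral>x. g (- x) *\<^sub>R cis (z \<bullet> (- x)) \<partial>lborel)"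
      using g_meas by (subst integral_distr) auto
    also have "\<dots> = char_fun_mv \<mu> (-z)"
      by (simp add: cmu g_sym[symmetric])
    finally show ?thesis ..
  qed
  have char_real: "Im (char_fun_mv \<mu> z) = 0" for z
  proof -
    have "char_fun_mv \<mu> (-z) = cnj (char_fun_mv \<mu> z)"
      unfolding char_fun_mv_def by (simp flip: cis_cnj)
    then show ?thesis using char_sym[of z] by (metis Reals_cnj_iff complex_is_Real_iff)
  qed
  have char_le: "norm (char_fun_mv \<mu> z) \<le> 1" for z
  proof -
    have "norm (char_fun_mv \<mu> z) \<le> (\<integral>x. norm (cis (z \<bullet> x)) \<partial>\<mu>)"
      unfolding char_fun_mv_def by (rule integral_norm_bound)
    also have "\<dots> = 1" by (simp add: mu.prob_space)
    finally show ?thesis .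
  qed
  have unitV: "stable_V \<alpha> lam u = complex_of_real (W u) \<and> 0 \<le> W u" if u: "norm u = 1" for u
  proof -
    define v where "v = stable_V \<alpha> lam u"
    have cr: "char_fun_mv \<mu> (r *\<^sub>R u) = exp (- complex_of_real (r powr \<alpha>) * v)" if r: "r > 0" for r
    proof -
      have "norm (r *\<^sub>R u) = r" using u r by simp
      moreover have "(r *\<^sub>R u) /\<^sub>R r = u" using r by simp
      ultimately show ?thesis using mu_char[of "r *\<^sub>R u"] by (simp add: v_def)
    qed
    have Im0: "Im v = 0"
    proof (rule ccontr)
      assume ne: "Im v \<noteq> 0"
      define r where "r = (pi / (2 * \<bar>Im v\<bar>)) powr (1 / \<alpha>)"
      have r0: "r > 0" using ne unfolding r_def by simp
      have ra: "r powr \<alpha> = pi / (2 * \<bar>Im v\<bar>)"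
        unfolding r_def using alpha ne by (simp add: powr_powr)
      have "Im (char_fun_mv \<mu> (r *\<^sub>R u)) = exp (Re (- complex_of_real (r powr \<alpha>) * v)) * sin (- (r powr \<alpha>) * Im v)"
        using cr[OF r0] by (simp add: Im_exp)
      moreover have "sin (- (r powr \<alpha>) * Im v) \<noteq> 0"
      proof -
        have "- (r powr \<alpha>) * Im v = (if Im v > 0 then - (pi / 2) else pi / 2)"
          using ne unfolding ra by (auto simp: abs_if field_simps)
        then show ?thesis by (simp split: if_splits)
      qed
      ultimately show False using char_real[of "r *\<^sub>R u"] by simp
    qed
    have "norm (char_fun_mv \<mu> (1 *\<^sub>R u)) = exp (- Re v)"
      using cr[of 1] by (simp add: norm_exp_eq_Re)
    then have "exp (- Re v) \<le> 1" using char_le by metis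
    then have "0 \<le> Re v" by simp
    moreover have "v = complex_of_real (Re v)" using Im0 by (simp add: complex_eq_iff)
    ultimately show ?thesis by (simp add: W_def v_def)
  qed
  have Vz: "stable_V \<alpha> lam (z /\<^sub>R norm z) = complex_of_real (W (z /\<^sub>R norm z)) \<and> 0 \<le> W (z /\<^sub>R norm z)" for z
  proof (cases "z = 0")
    case True then show ?thesis by (simp add: V0 W_def)
  next
    case False then show ?thesis by (intro unitV) simp
  qed
  have Wm[measurable]: "W \<in> borel_measurable borel"
  proof -
    interpret lamF: finite_measure lam by fact
    have [measurable]: "(\<lambda>(u::real^'n, v). complex_of_real (\<bar>u \<bullet> v\<bar> powr \<alpha>) *
       (1 - \<i> * complex_of_real (tan (pi * \<alpha> / 2) * sgn (u \<bullet> v)))) \<in> borel_measurable (borel \<Otimes>\<^sub>M lam)"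
      unfolding measurable_cong_sets[OF sets_pair_measure_cong[OF refl lam_sets] refl]
      by measurable
    have "(\<lambda>u. stable_V \<alpha> lam u) \<in> borel_measurable borel"
      unfolding stable_V_def by measurable
    then show ?thesis unfolding W_def by measurable
  qed
  define R where "R \<omega> = W (Z \<omega> /\<^sub>R norm (Z \<omega>)) powr (1 / \<alpha>) * sqrt (2 * \<zeta> \<omega>) * norm (Z \<omega>)" for \<omega>
  have Rm[measurable]: "R \<in> borel_measurable M" unfolding R_def by measurable
  have Rnn: "0 \<le> R \<omega>" if "\<omega> \<in> space M" for \<omega>
    unfolding R_def using zeta_pos[OF that] by (simp add: less_imp_le)
  define E where "E n z = exp (- ((2 * real n) powr (\<alpha> / 2) * norm z powr \<alpha> * W (z /\<^sub>R norm z)))" for n :: nat and z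
  have Em[measurable]: "E n \<in> borel_measurable borel" for n unfolding E_def by measurable
  have lhs: "(\<integral>x. exp (- (norm x ^ 2)) ^ n \<partial>\<mu>) = (\<integral>\<omega>. E n (Z \<omega>) \<partial>M)" for n
  proof -
    define c where "c = sqrt (2 * real n)"
    have c0: "c \<ge> 0" unfolding c_def by simp
    have cc: "c ^ 2 = 2 * real n" unfolding c_def by simp
    have pt: "exp (- (norm x ^ 2)) ^ n = exp (- (norm (c *\<^sub>R x) ^ 2) / 2)" for x :: "real^'n"
    proof -
      have "exp (- (norm x ^ 2)) ^ n = exp (real n * - (norm x ^ 2))" by (simp only: exp_of_nat_mult)
      also have "real n * - (norm x ^ 2) = - (norm (c *\<^sub>R x) ^ 2) / 2"
        using cc by (simp add: power_mult_distrib)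
      finally show ?thesis .
    qed
    have pw: "exp (- complex_of_real (norm (c *\<^sub>R z) powr \<alpha>) * stable_V \<alpha> lam ((c *\<^sub>R z) /\<^sub>R norm (c *\<^sub>R z)))
        = complex_of_real (E n z)" for z
    proof (cases "c = 0 \<or> z = 0")
      case True
      then have "c = 0 \<and> n = 0 \<or> z = 0" unfolding c_def by auto
      then show ?thesis by (auto simp: E_def)
    next
      case False
      then have cp: "c > 0" and zp: "norm z > 0" using c0 by auto
      have u: "(c *\<^sub>R z) /\<^sub>R norm (c *\<^sub>R z) = z /\<^sub>R norm z" using cp by simp
      have "norm (c *\<^sub>R z) powr \<alpha> = c powr \<alpha> * norm z powr \<alpha>" using cp by (simp add: powr_mult)
      also have "c powr \<alpha> = (2 * real n) powr (\<alpha> / 2)"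
        unfolding c_def by (simp add: powr_half_sqrt[symmetric] powr_powr)
      finally have "norm (c *\<^sub>R z) powr \<alpha> = (2 * real n) powr (\<alpha> / 2) * norm z powr \<alpha>" .
      then have "exp (- complex_of_real (norm (c *\<^sub>R z) powr \<alpha>) * stable_V \<alpha> lam ((c *\<^sub>R z) /\<^sub>R norm (c *\<^sub>R z)))
          = exp (complex_of_real (- ((2 * real n) powr (\<alpha> / 2) * norm z powr \<alpha> * W (z /\<^sub>R norm z))))"
        unfolding u using Vz[of z] by simp
      then show ?thesis by (simp only: exp_of_real E_def)
    qed
    have cM: "(\<lambda>\<omega>. cis (Z \<omega> \<bullet> y)) \<in> borel_measurable M" for y unfolding cis_conv_exp by measurable
    interpret PM: pair_sigma_finite \<mu> M
      by (intro pair_sigma_finite.intro mu.sigma_finite_measure_axioms M.sigma_finite_measure_axioms)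
    interpret PP: prob_space "\<mu> \<Otimes>\<^sub>M M" by (rule prob_space_pair) (rule mu_prob, rule M_prob)
    have integ: "integrable (\<mu> \<Otimes>\<^sub>M M) (case_prod (\<lambda>x \<omega>. cis (Z \<omega> \<bullet> (c *\<^sub>R x))))"
    proof (rule PP.integrable_const_bound[where B=1])
      show "AE x in \<mu> \<Otimes>\<^sub>M M. norm (case x of (x, \<omega>) \<Rightarrow> cis (Z \<omega> \<bullet> (c *\<^sub>R x))) \<le> 1"
        by (simp add: split_beta)
      show "(\<lambda>x. case x of (x, \<omega>) \<Rightarrow> cis (Z \<omega> \<bullet> (c *\<^sub>R x))) \<in> borel_measurable (\<mu> \<Otimes>\<^sub>M M)"
        unfolding cis_conv_exp by measurable
    qed
    have "complex_of_real (\<integral>x. exp (- (norm x ^ 2)) ^ n \<partial>\<mu>) = (CLINT x|\<mu>. CLINT \<omega>|M. cis (Z \<omega> \<bullet> (c *\<^sub>R x)))"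
    proof -
      have g2: "(CLINT \<omega>|M. cis (Z \<omega> \<bullet> (c *\<^sub>R x))) = complex_of_real (exp (- (norm (c *\<^sub>R x) ^ 2) / 2))" for x
        by (rule gauss[OF M_prob Z_meas Z_gauss Z_indep])
      show ?thesis by (simp only: g2 pt integral_complex_of_real)
    qed
    also have "\<dots> = (CLINT \<omega>|M. CLINT x|\<mu>. cis (Z \<omega> \<bullet> (c *\<^sub>R x)))"
      by (rule PM.Fubini_integral[symmetric, OF integ])
    also have "\<dots> = (CLINT \<omega>|M. char_fun_mv \<mu> (c *\<^sub>R Z \<omega>))"
      by (simp add: char_fun_mv_def)
    also have "\<dots> = (CLINT \<omega>|M. complex_of_real (E n (Z \<omega>)))"
      by (simp only: mu_char pw)
    also have "\<dots> = complex_of_real (\<integral>\<omega>. E n (Z \<omega>) \<partial>M)" by simp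
    finally show ?thesis by simp
  qed
  have rhs: "(\<integral>\<omega>. exp (- (R \<omega> ^ 2)) ^ n \<partial>M) = (\<integral>\<omega>. E n (Z \<omega>) \<partial>M)" for n
  proof -
    define C where "C z = 2 * real n * W (z /\<^sub>R norm z) powr (2 / \<alpha>) * norm z ^ 2" for z :: "real^'n"
    have Cm[measurable]: "C \<in> borel_measurable borel" unfolding C_def by measurable
    have C0: "C z \<ge> 0" for z unfolding C_def by simp
    define F where "F p = exp (- (C (fst p) * max 0 (snd p)))" for p :: "(real^'n) \<times> real"
    have Fm[measurable]: "F \<in> borel_measurable (borel \<Otimes>\<^sub>M borel)" unfolding F_def by measurable
    have CE: "exp (- (C z powr (\<alpha> / 2))) = E n z" for z
    proof -
      have W0: "W (z /\<^sub>R norm z) \<ge> 0" using Vz[of z] by simp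
      have "C z powr (\<alpha> / 2) = (2 * real n) powr (\<alpha> / 2) * (W (z /\<^sub>R norm z) powr (2 / \<alpha>)) powr (\<alpha> / 2)
             * (norm z ^ 2) powr (\<alpha> / 2)"
        unfolding C_def by (simp add: powr_mult)
      also have "(W (z /\<^sub>R norm z) powr (2 / \<alpha>)) powr (\<alpha> / 2) = W (z /\<^sub>R norm z)"
        using alpha W0 by (simp add: powr_powr)
      also have "(norm z ^ 2) powr (\<alpha> / 2) = norm z powr \<alpha>"
      proof -
        have "norm z ^ 2 = norm z powr 2" by (simp add: powr_numeral)
        then have "(norm z ^ 2) powr (\<alpha> / 2) = (norm z powr 2) powr (\<alpha> / 2)" by simp
        also have "\<dots> = norm z powr \<alpha>" by (simp only: powr_powr) simp
        finally show ?thesis .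
      qed
      finally show ?thesis unfolding E_def by (simp add: mult_ac)
    qed
    have step1: "(\<integral>\<omega>. exp (- (R \<omega> ^ 2)) ^ n \<partial>M) = (\<integral>\<omega>. F (Z \<omega>, \<zeta> \<omega>) \<partial>M)"
    proof (rule Bochner_Integration.integral_cong[OF refl])
      fix \<omega> assume \<omega>: "\<omega> \<in> space M"
      have zp: "\<zeta> \<omega> > 0" using zeta_pos[OF \<omega>] .
      define w where "w = W (Z \<omega> /\<^sub>R norm (Z \<omega>))"
      have "R \<omega> ^ 2 = (w powr (1 / \<alpha>)) ^ 2 * (sqrt (2 * \<zeta> \<omega>)) ^ 2 * norm (Z \<omega>) ^ 2"
        unfolding R_def w_def by (simp add: power_mult_distrib)
      also have "(w powr (1 / \<alpha>)) ^ 2 = w powr (2 / \<alpha>)"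
        by (simp add: power2_eq_square powr_add[symmetric])
      also have "(sqrt (2 * \<zeta> \<omega>)) ^ 2 = 2 * \<zeta> \<omega>" using zp by simp
      finally have "real n * R \<omega> ^ 2 = C (Z \<omega>) * \<zeta> \<omega>" unfolding C_def w_def by (simp add: mult_ac)
      then have "exp (- (R \<omega> ^ 2)) ^ n = exp (- (C (Z \<omega>) * \<zeta> \<omega>))"
        by (simp flip: exp_of_nat_mult)
      then show "exp (- (R \<omega> ^ 2)) ^ n = F (Z \<omega>, \<zeta> \<omega>)" using zp by (simp add: F_def)
    qed
    interpret PZ: prob_space "distr M borel Z" by (rule M.prob_space_distr) simp
    interpret Pz: prob_space "distr M borel \<zeta>" by (rule M.prob_space_distr) simp
    interpret PP: pair_sigma_finite "distr M borel Z" "distr M borel \<zeta>"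
      by (intro pair_sigma_finite.intro PZ.sigma_finite_measure_axioms Pz.sigma_finite_measure_axioms)
    interpret PPp: prob_space "distr M borel Z \<Otimes>\<^sub>M distr M borel \<zeta>"
      by (rule prob_space_pair) (rule PZ.prob_space_axioms, rule Pz.prob_space_axioms)
    have Fint: "integrable (distr M borel Z \<Otimes>\<^sub>M distr M borel \<zeta>) F"
    proof (rule PPp.integrable_const_bound[where B=1])
      show "AE x in distr M borel Z \<Otimes>\<^sub>M distr M borel \<zeta>. norm (F x) \<le> 1"
        using C0 by (simp add: F_def)
    qed simp
    have inner: "(\<integral>s. F (z, s) \<partial>distr M borel \<zeta>) = exp (- (C z powr (\<alpha> / 2)))" for z
    proof -
      have "(\<integral>s. F (z, s) \<partial>distr M borel \<zeta>) = (\<integral>\<omega>. F (z, \<zeta> \<omega>) \<partial>M)"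
        by (subst integral_distr) auto
      also have "\<dots> = (\<integral>\<omega>. exp (- C z * \<zeta> \<omega>) \<partial>M)"
        by (rule Bochner_Integration.integral_cong[OF refl]) (use zeta_pos in \<open>auto simp: F_def less_imp_le\<close>)
      also have "\<dots> = exp (- (C z powr (\<alpha> / 2)))" by (rule zeta_laplace[OF C0])
      finally show ?thesis .
    qed
    have "(\<integral>\<omega>. F (Z \<omega>, \<zeta> \<omega>) \<partial>M) = (\<integral>p. F p \<partial>distr M (borel \<Otimes>\<^sub>M borel) (\<lambda>\<omega>. (Z \<omega>, \<zeta> \<omega>)))"
      by (subst integral_distr) auto
    also have "\<dots> = (\<integral>p. F p \<partial>(distr M borel Z \<Otimes>\<^sub>M distr M borel \<zeta>))" by (simp only: zeta_indep)
    also have "\<dots> = (\<integral>z. (\<integral>s. F (z, s) \<partial>distr M borel \<zeta>) \<partial>distr M borel Z)"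
      by (rule PP.integral_fst'[OF Fint, symmetric])
    also have "\<dots> = (\<integral>z. E n z \<partial>distr M borel Z)" by (simp add: inner CE)
    also have "\<dots> = (\<integral>\<omega>. E n (Z \<omega>) \<partial>M)" by (subst integral_distr) auto
    finally show ?thesis using step1 by simp
  qed
  define h where "h r = exp (- (r ^ 2))" for r :: real
  have hm[measurable]: "h \<in> borel_measurable borel" unfolding h_def by measurable
  have eq: "distr \<mu> borel (\<lambda>x. h (norm x)) = distr M borel (\<lambda>\<omega>. h (R \<omega>))"
  proof (rule mom_unique)
    show "prob_space (distr \<mu> borel (\<lambda>x. h (norm x)))" by (rule mu.prob_space_distr) simp
    show "prob_space (distr M borel (\<lambda>\<omega>. h (R \<omega>)))" by (rule M.prob_space_distr) simp
    show "AE x in distr \<mu> borel (\<lambda>x. h (norm x)). 0 \<le> x \<and> x \<le> 1"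
      by (subst AE_distr_iff) (auto simp: h_def)
    show "AE x in distr M borel (\<lambda>\<omega>. h (R \<omega>)). 0 \<le> x \<and> x \<le> 1"
      by (subst AE_distr_iff) (auto simp: h_def)
    show "(\<integral>x. x ^ n \<partial>distr \<mu> borel (\<lambda>x. h (norm x))) = (\<integral>x. x ^ n \<partial>distr M borel (\<lambda>\<omega>. h (R \<omega>)))" for n
      using lhs[of n] rhs[of n] by (simp add: integral_distr h_def)
  qed simp_all
  define hi where "hi y = sqrt (- ln y)" for y :: real
  have hi_h: "r \<ge> 0 \<Longrightarrow> hi (h r) = r" for r by (simp add: hi_def h_def)
  have him[measurable]: "hi \<in> borel_measurable borel" unfolding hi_def by measurable
  have "distr \<mu> borel norm = distr \<mu> borel (\<lambda>x. hi (h (norm x)))"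
    by (rule distr_cong) (auto simp: hi_h)
  also have "\<dots> = distr (distr \<mu> borel (\<lambda>x. h (norm x))) borel hi"
    by (subst distr_distr) (auto simp: comp_def)
  also have "\<dots> = distr (distr M borel (\<lambda>\<omega>. h (R \<omega>))) borel hi" by (simp add: eq)
  also have "\<dots> = distr M borel (\<lambda>\<omega>. hi (h (R \<omega>)))"
    by (subst distr_distr) (auto simp: comp_def)
  also have "\<dots> = distr M borel R"
    by (rule distr_cong) (auto simp: hi_h Rnn)
  finally show ?thesis unfolding R_def W_def by simp
qed

end
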